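(* Assume the setting of the context. If $V(\phi_R)>\sin^2\!\left(\frac{\phi_R-\phi_m}{2}\right)V(\phi_m)$, then $v_3<0$.
   Context: Let $\phi_a<\phi_b$ with $\phi_b-\phi_a\le\pi$, $\phi_m=(\phi_a+\phi_b)/2$. Let $V:(\phi_a,\phi_b)\to(0,\infty)$ be $V(\phi)=\frac{\beta_1}{\sin(\phi_b-\phi)}+\frac{\beta_2}{\sin(\phi-\phi_a)}+\widehat V(\phi)$ with constants $\beta_1>0$, $\beta_2\ge0$, where $\beta_2=0$ if and only if $\phi_b-\phi_a=\pi$, and $\widehat V>0$ a bounded $C^3$ function on $[\phi_a,\phi_b]$. Assume $V$ is symmetric about $\phi_m$ and has exactly three critical points $\phi_L<\phi_m<\phi_R$ in $(\phi_a,\phi_b)$, all non-degenerate. Let $f(\phi)=\sin(\phi-\phi_a)\sin(\phi_b-\phi)$ if $\phi_b-\phi_a<\pi$ and $f(\phi)=\sin(\phi_b-\phi)$ if $\phi_b-\phi_a=\pi$; let $W=fV$, $F=f/\sqrt W$. (This arises from a Lagrangian $\frac12\dot r^2+\frac12r^2\dot\phi^2+V(\phi)/r$ with $v=r^{1/2}\dot r$, $w=\dot\phi\,r^{3/2}\sqrt{f/V}$ and time change $dt/ds=r^{3/2}F(\phi)$.) On the collision manifold $r=0$ the flow is ($'=d/ds$) $v'=\sqrt{W(\phi)}-\frac12F(\phi)v^2$, $\phi'=w$, $w'=-\frac{vw}{2}F(\phi)+\frac{W'(\phi)}{W(\phi)}(f(\phi)-\frac{w^2}{2})+f'(\phi)(1-\frac{f(\phi)}{W(\phi)}v^2)$,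 restricted to $\{\frac{w^2}{2f(\phi)}+\frac{f(\phi)}{W(\phi)}\frac{v^2}{2}=1\}$. The point $L'_-=(v,\phi,w)=(-\sqrt{2V(\phi_L)},\phi_L,0)$ is an equilibrium whose unstable manifold in the collision manifold is one-dimensional; let $\gamma'$ be its branch along which initially $w\ge0$, and let $v_3$ be the $v$-coordinate of the point where $\gamma'$ first reaches $\phi=\phi_m$. *)

theory Defs
  imports "HOL-Analysis.Analysis"
begin

definition C3_on :: "real \<Rightarrow> real \<Rightarrow> (real \<Rightarrow> real) \<Rightarrow> bool" where
  "C3_on a b g \<longleftrightarrow> (\<exists>g1 g2 g3. continuous_on {a..b} g3 \<and>
     (\<forall>x\<in>{a..b}. (g has_real_derivative g1 x) (at x within {a..b}) \<and>
                  (g1 has_real_derivative g2 x) (at x within {a..b}) \<and>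
                  (g2 has_real_derivative g3 x) (at x within {a..b})))"

definition Vpot :: "real \<Rightarrow> real \<Rightarrow> real \<Rightarrow> real \<Rightarrow> (real \<Rightarrow> real) \<Rightarrow> real \<Rightarrow> real" where
  "Vpot pa pb b1 b2 Vh phi = b1 / sin (pb - phi) + b2 / sin (phi - pa) + Vh phi"

definition fcoef :: "real \<Rightarrow> real \<Rightarrow> real \<Rightarrow> real" where
  "fcoef pa pb phi = (if pb - pa < pi then sin (phi - pa) * sin (pb - phi) else sin (pb - phi))"

definition Wfun :: "real \<Rightarrow> real \<Rightarrow> (real \<Rightarrow> real) \<Rightarrow> real \<Rightarrow> real" where
  "Wfun pa pb V phi = fcoef pa pb phi * V phi"

definition Ffun :: "real \<Rightarrow> real \<Rightarrow> (real \<Rightarrow> real) \<Rightarrow> real \<Rightarrow> real" where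
  "Ffun pa pb V phi = fcoef pa pb phi / sqrt (Wfun pa pb V phi)"

text \<open>Right-hand side of the flow on the collision manifold r = 0
  (components for v', phi', w').\<close>
definition coll_v :: "real \<Rightarrow> real \<Rightarrow> (real \<Rightarrow> real) \<Rightarrow> real \<Rightarrow> real \<Rightarrow> real \<Rightarrow> real" where
  "coll_v pa pb V v phi w = sqrt (Wfun pa pb V phi) - Ffun pa pb V phi * v\<^sup>2 / 2"

definition coll_w :: "real \<Rightarrow> real \<Rightarrow> (real \<Rightarrow> real) \<Rightarrow> real \<Rightarrow> real \<Rightarrow> real \<Rightarrow> real" where
  "coll_w pa pb V v phi w =
     - (v * w / 2) * Ffun pa pb V phi
     + deriv (Wfun pa pb V) phi / Wfun pa pb V phi * (fcoef pa pb phi - w\<^sup>2 / 2)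
     + deriv (fcoef pa pb) phi * (1 - fcoef pa pb phi / Wfun pa pb V phi * v\<^sup>2)"

definition on_coll_mfd :: "real \<Rightarrow> real \<Rightarrow> (real \<Rightarrow> real) \<Rightarrow> real \<Rightarrow> real \<Rightarrow> real \<Rightarrow> bool" where
  "on_coll_mfd pa pb V v phi w \<longleftrightarrow>
     w\<^sup>2 / (2 * fcoef pa pb phi) + fcoef pa pb phi / Wfun pa pb V phi * v\<^sup>2 / 2 = 1"

end

theory Submission
  imports Defs
begin


lemma between_inj:
  fixes f :: "real \<Rightarrow> real"
  assumes c: "continuous_on {a..c} f" and inj: "inj_on f {a..c}" and lt: "f a < f c"
    and x: "a < x" "x < c"
  shows "f a < f x \<and> f x < f c"
proof (rule ccontr)
  assume H: "\<not> (f a < f x \<and> f x < f c)"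
  have xa: "f x \<noteq> f a" using inj x by (metis atLeastAtMost_iff inj_onD less_eq_real_def less_irrefl order.strict_trans)
  have xc: "f x \<noteq> f c" using inj x by (metis atLeastAtMost_iff inj_onD less_eq_real_def less_irrefl order.strict_trans)
  show False
  proof (cases "f x \<le> f a")
    case True
    hence "f x < f a" using xa by simp
    have c1: "continuous_on {x..c} f" using continuous_on_subset[OF c] x by simp
    have i1: "f x \<le> f a" "f a \<le> f c" "x \<le> c" using \<open>f x < f a\<close> lt x by auto
    obtain z where z: "x \<le> z" "z \<le> c" "f z = f a"
      using IVT'[OF i1 c1] by blast
    have "z = a" using inj_onD[OF inj, of z a] z x by auto
    thus False using z x by simp
  next
    case False
    hence "f c < f x" using H xc by auto
    have c1: "continuous_on {a..x} f" using continuous_on_subset[OF c] x by simp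
    have i1: "f a \<le> f c" "f c \<le> f x" "a \<le> x" using \<open>f c < f x\<close> lt x by auto
    obtain z where z: "a \<le> z" "z \<le> x" "f z = f c"
      using IVT'[OF i1 c1] by blast
    have "z = c" using inj_onD[OF inj, of z c] z x by auto
    thus False using z x by simp
  qed
qed

lemma inc_from_inj:
  fixes f :: "real \<Rightarrow> real"
  assumes c: "continuous_on {a..c} f" and inj: "inj_on f {a..c}"
    and lt: "\<forall>x\<in>{a<..c}. f a < f x"
    and xy: "a \<le> x" "x < y" "y \<le> c"
  shows "f x < f y"
proof (cases "x = a")
  case True thus ?thesis using lt xy by auto
next
  case False
  show ?thesis
  proof (rule ccontr)
    assume "\<not> f x < f y"
    moreover have "f x \<noteq> f y" using inj_onD[OF inj, of x y] xy by auto
    ultimately have "f y < f x" by simp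
    have "f a < f y" using lt xy by auto
    have c1: "continuous_on {a..x} f" using continuous_on_subset[OF c] xy by simp
    have i1: "f a \<le> f y" "f y \<le> f x" "a \<le> x" using \<open>f y < f x\<close> \<open>f a < f y\<close> xy by auto
    obtain z where z: "a \<le> z" "z \<le> x" "f z = f y"
      using IVT'[OF i1 c1] by blast
    have "z = y" using inj_onD[OF inj, of z y] z xy by auto
    thus False using z xy by simp
  qed
qed



lemma V_facts:
  fixes pa pb b1 b2 :: real and Vh :: "real \<Rightarrow> real" and pL pR pm :: real and V :: "real \<Rightarrow> real"
  assumes pm_def: "pm = (pa + pb) / 2"
    and V_def: "V = Vpot pa pb b1 b2 Vh"
  assumes ab: "pa < pb" "pb - pa \<le> pi"
    and beta: "b1 > 0" "b2 \<ge> 0"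
    and Vh_C3: "C3_on pa pb Vh"
    and Vh_pos: "\<forall>x\<in>{pa..pb}. Vh x > 0"
    and V_pos: "\<forall>x\<in>{pa<..<pb}. V x > 0"
    and V_sym: "\<forall>x. pm + x \<in> {pa<..<pb} \<longrightarrow> V (pm + x) = V (pm - x)"
    and crit_order: "pL < pm" "pm < pR"
    and crit: "{x\<in>{pa<..<pb}. deriv V x = 0} = {pL, pm, pR}"
    and nondeg: "\<forall>x\<in>{pL, pm, pR}. deriv (deriv V) x \<noteq> 0"
  shows "pR = 2*pm - pL \<and> V pR = V pL \<and> (\<forall>x\<in>{pa<..pm}. x \<noteq> pL \<longrightarrow> V pL < V x)
     \<and> (\<forall>x\<in>{pL..<pm}. V x < V pm) \<and> continuous_on {pa<..<pb} V \<and> pa < pL \<and> pR < pb"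
proof -
  obtain g1 g2 g3 where gs: "\<forall>x\<in>{pa..pb}. (Vh has_real_derivative g1 x) (at x within {pa..pb}) \<and>
                  (g1 has_real_derivative g2 x) (at x within {pa..pb})"
    using Vh_C3 unfolding C3_on_def by blast
  define DV where "DV x = b1 * cos (pb - x) / (sin (pb - x))\<^sup>2 - b2 * cos (x - pa) / (sin (x - pa))\<^sup>2 + g1 x" for x
  have g1at: "(Vh has_real_derivative g1 x) (at x)" and g2at: "(g1 has_real_derivative g2 x) (at x)"
    if "x \<in> {pa<..<pb}" for x
  proof -
    have e: "at x within {pa..pb} = at x" using that at_within_Icc_at[of pa x pb] by auto
    show "(Vh has_real_derivative g1 x) (at x)" "(g1 has_real_derivative g2 x) (at x)"
      using gs[rule_format, of x] that unfolding e by auto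
  qed
  have dV: "(V has_real_derivative DV x) (at x)" if x: "x \<in> {pa<..<pb}" for x
  proof -
    have s1: "sin (pb - x) > 0" using ab x by (intro sin_gt_zero) auto
    have s2: "sin (x - pa) > 0" using ab x by (intro sin_gt_zero) auto
    have "((\<lambda>x. b1 / sin (pb - x) + b2 / sin (x - pa) + Vh x) has_real_derivative DV x) (at x)"
      using s1 s2 unfolding DV_def
      by (auto intro!: derivative_eq_intros g1at[OF x] simp: field_simps power2_eq_square)
    then show ?thesis unfolding V_def Vpot_def[abs_def] .
  qed
  have deq: "deriv V x = DV x" if "x \<in> {pa<..<pb}" for x
    using dV[OF that] by (rule DERIV_imp_deriv)
  have ddV: "(deriv V has_real_derivative deriv (deriv V) x) (at x)" if x: "x \<in> {pa<..<pb}" for x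
  proof -
    have s1: "sin (pb - x) > 0" using ab x by (intro sin_gt_zero) auto
    have s2: "sin (x - pa) > 0" using ab x by (intro sin_gt_zero) auto
    have "(DV has_real_derivative
       (b1 * (- sin (pb - x) * (-1) * (sin (pb - x))\<^sup>2 - cos (pb - x) * (2 * sin (pb - x) * (cos (pb - x) * (-1)))) / ((sin (pb - x))\<^sup>2)\<^sup>2)
      - b2 * (- sin (x - pa) * (sin (x - pa))\<^sup>2 - cos (x - pa) * (2 * sin (x - pa) * cos (x - pa))) / ((sin (x - pa))\<^sup>2)\<^sup>2
      + g2 x) (at x)"
      unfolding DV_def[abs_def] using s1 s2
      by (auto intro!: derivative_eq_intros g2at[OF x] simp: field_simps power2_eq_square)
    then obtain D where "(DV has_real_derivative D) (at x)" by blast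
    hence "(deriv V has_real_derivative D) (at x)"
      by (rule has_field_derivative_transform_within_open[where S="{pa<..<pb}"]) (use x deq in auto)
    moreover hence "deriv (deriv V) x = D" by (rule DERIV_imp_deriv)
    ultimately show ?thesis by simp
  qed
  have cont: "continuous_on {pa<..<pb} V"
    using dV by (intro continuous_at_imp_continuous_on ballI DERIV_isCont) blast
  have crit_iff: "x \<in> {pa<..<pb} \<Longrightarrow> deriv V x = 0 \<longleftrightarrow> x \<in> {pL, pm, pR}" for x
    using crit by blast
  have inL: "pL \<in> {pa<..<pb}" and inR: "pR \<in> {pa<..<pb}" and inm: "pm \<in> {pa<..<pb}"
    using crit by blast+
  have sym: "V y = V (2*pm - y)" if "y \<in> {pa<..<pb}" for y
    using V_sym[rule_format, of "y - pm"] that by (simp add: algebra_simps)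
  have pR_eq: "pR = 2*pm - pL"
  proof -
    have d0: "(V has_real_derivative 0) (at pL)" using dV[OF inL] deq[OF inL] crit_iff[OF inL] by simp
    have g: "((\<lambda>y. 2*pm - y) has_real_derivative -1) (at (2*pm - pL))"
      by (auto intro!: derivative_eq_intros)
    have d0': "(V has_real_derivative 0) (at (2*pm - (2*pm - pL)))" using d0 by simp
    have "((\<lambda>y. V (2*pm - y)) has_real_derivative 0 * (-1)) (at (2*pm - pL))"
      using DERIV_chain2[OF d0' g] .
    hence "((\<lambda>y. V (2*pm - y)) has_real_derivative 0) (at (2*pm - pL))" by simp
    hence "(V has_real_derivative 0) (at (2*pm - pL))"
    proof (rule has_field_derivative_transform_within_open[where S="{pa<..<pb}"])
      show "open {pa<..<pb}" by simp
      show "2*pm - pL \<in> {pa<..<pb}" using inL pm_def by auto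
      show "V (2*pm - y) = V y" if "y \<in> {pa<..<pb}" for y using sym[OF that] by simp
    qed
    hence "deriv V (2*pm - pL) = 0" by (rule DERIV_imp_deriv)
    moreover have "2*pm - pL \<in> {pa<..<pb}" using inL pm_def by auto
    ultimately have "2*pm - pL \<in> {pL, pm, pR}" using crit_iff by blast
    thus ?thesis using crit_order by auto
  qed
  have VR: "V pR = V pL" using sym[OF inR] pR_eq by simp
  have rolle: "\<exists>z. x < z \<and> z < y \<and> z \<in> {pL, pm, pR}"
    if xy: "pa < x" "x < y" "y < pb" "V x = V y" for x y
  proof -
    obtain z where z: "x < z" "z < y" "(V has_real_derivative 0) (at z)"
    proof -
      have c: "continuous_on {x..y} V" by (rule continuous_on_subset[OF cont]) (use xy in auto)
      have d: "V differentiable (at u)" if "x < u" "u < y" for u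
        using dV[of u] that xy real_differentiable_def by auto
      show ?thesis using Rolle[of x y V, OF xy(2) xy(4) c d] that by blast
    qed
    have "z \<in> {pa<..<pb}" using z xy by auto
    moreover hence "deriv V z = 0" using z DERIV_imp_deriv by blast
    ultimately show ?thesis using z crit_iff by blast
  qed
  have injI: "inj_on V {x..y}" if H: "pa < x" "y < pb" "\<forall>z\<in>{x<..<y}. z \<notin> {pL, pm, pR}" for x y
  proof (rule inj_onI)
    fix u u' assume uu: "u \<in> {x..y}" "u' \<in> {x..y}" "V u = V u'"
    show "u = u'"
    proof (rule ccontr)
      assume "u \<noteq> u'"
      then consider "u < u'" | "u' < u" by linarith
      thus False
      proof cases
        case 1 then obtain z where "u < z" "z < u'" "z \<in> {pL, pm, pR}" using rolle[of u u'] uu H by auto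
        thus False using H uu by auto
      next
        case 2 then obtain z where "u' < z" "z < u" "z \<in> {pL, pm, pR}" using rolle[of u' u] uu H by auto
        thus False using H uu by auto
      qed
    qed
  qed
  have contI: "continuous_on {x..y} V" if "pa < x" "y < pb" for x y
    by (rule continuous_on_subset[OF cont]) (use that in auto)
  have VLpos: "V pL > 0" using V_pos inL by auto
  have blow: "\<exists>x1\<in>{pR<..<pb}. V pL < V x1"
  proof -
    define \<delta> where "\<delta> = min ((pb - pR)/2) (b1/(2 * V pL))"
    have dpos: "\<delta> > 0" unfolding \<delta>_def using inR beta VLpos by auto
    have dlt: "\<delta> < pi" unfolding \<delta>_def using inR ab by (auto simp: min_def)
    have "\<delta> \<le> (pb - pR)/2" unfolding \<delta>_def by (rule min.cobounded1)
    hence x1: "pb - \<delta> \<in> {pR<..<pb}" using dpos inR by auto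
    have sd: "sin \<delta> > 0" using dpos dlt by (intro sin_gt_zero) auto
    have sdl: "sin \<delta> \<le> \<delta>" using dpos by (intro sin_x_le_x) auto
    have s2: "sin (pb - \<delta> - pa) > 0" using x1 ab inR by (intro sin_gt_zero) auto
    have "b1 / \<delta> \<le> b1 / sin \<delta>" using sd sdl beta by (intro divide_left_mono) auto
    moreover have "2 * V pL \<le> b1 / \<delta>"
      using dpos VLpos beta unfolding \<delta>_def by (auto simp: field_simps min_def)
    moreover have "b2 / sin (pb - \<delta> - pa) \<ge> 0" using beta s2 by simp
    moreover have "Vh (pb - \<delta>) > 0" using Vh_pos x1 inR by auto
    moreover have "V (pb - \<delta>) = b1 / sin \<delta> + b2 / sin (pb - \<delta> - pa) + Vh (pb - \<delta>)"
      by (simp add: V_def Vpot_def)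
    ultimately have "V pL < V (pb - \<delta>)" using VLpos by linarith
    thus ?thesis using x1 by blast
  qed
  then obtain x1 where x1: "x1 \<in> {pR<..<pb}" "V pL < V x1" by blast
  have right: "V pL < V x" if x: "x \<in> {pR<..<pb}" for x
  proof (rule ccontr)
    assume "\<not> V pL < V x"
    define y where "y = max x x1"
    have inj: "inj_on V {pR..y}" using injI[of pR y] inR x x1 crit_order unfolding y_def by auto
    have mem: "x \<in> {pR..y}" "x1 \<in> {pR..y}" "pR \<in> {pR..y}" using x x1 by (auto simp: y_def)
    have "V x \<noteq> V pR" using inj_onD[OF inj, of x pR] x mem by auto
    hence lt: "V x < V pL" using \<open>\<not> V pL < V x\<close> VR by auto
    show False
    proof (cases "x < x1")
      case True
      have i1: "V x \<le> V pL" "V pL \<le> V x1" "x \<le> x1" using lt x1 True by auto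
      obtain z where z: "x \<le> z" "z \<le> x1" "V z = V pL"
        using IVT'[OF i1 contI] x x1 inR by auto
      have "z \<in> {pR..y}" using z mem by auto
      hence "z = pR" using inj_onD[OF inj, of z pR] z VR mem by auto
      thus False using z x by auto
    next
      case False
      have i1: "V x \<le> V pL" "V pL \<le> V x1" "x1 \<le> x" using lt x1 False by auto
      obtain z where z: "x1 \<le> z" "z \<le> x" "V z = V pL"
        using IVT2'[OF i1 contI] x x1 inR by auto
      have "z \<in> {pR..y}" using z mem by auto
      hence "z = pR" using inj_onD[OF inj, of z pR] z VR mem by auto
      thus False using z x1 by auto
    qed
  qed
  have left: "V pL < V x" if x: "x \<in> {pa<..<pL}" for x
  proof -
    have "2*pm - x \<in> {pR<..<pb}" using x pR_eq pm_def inR by (simp add: field_simps)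
    thus ?thesis using right sym[of x] x inL by auto
  qed
  have injLm: "inj_on V {pL..pm}" using injI[of pL pm] inL inm crit_order by auto
  have contLm: "continuous_on {pL..pm} V" using contI inL inm by auto
  have neq: "V pL \<noteq> V pm" using inj_onD[OF injLm, of pL pm] crit_order by auto
  have order: "V pL < V pm"
  proof (rule ccontr)
    assume "\<not> V pL < V pm"
    hence mlt: "V pm < V pR" using neq VR by auto
    have injmR: "inj_on V {pm..pR}" using injI[of pm pR] inR inm crit_order by auto
    have contmR: "continuous_on {pm..pR} V" using contI inR inm by auto
    have btw: "\<forall>x\<in>{pm<..pR}. V pm < V x"
      using between_inj[OF contmR injmR mlt] mlt by (auto simp: le_less)
    have inc1: "V x < V y" if "pm \<le> x" "x < y" "y \<le> pR" for x y
      using inc_from_inj[OF contmR injmR btw that] .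
    have inc2: "V x < V y" if "pR \<le> x" "x < y" "y < pb" for x y
    proof -
      have c: "continuous_on {pR..y} V" using contI inR that by auto
      have i: "inj_on V {pR..y}" using injI[of pR y] inR that crit_order by auto
      have "\<forall>x\<in>{pR<..y}. V pR < V x" using right VR that by auto
      from inc_from_inj[OF c i this that(1,2)] show ?thesis by simp
    qed
    have D: "deriv (deriv V) pR \<noteq> 0" using nondeg by auto
    have dR: "deriv V pR = 0" using crit_iff[OF inR] by auto
    have dVy: "(V has_real_derivative deriv V y) (at y)" if "y \<in> {pa<..<pb}" for y
      using dV[OF that] deq[OF that] by simp
    show False
    proof (cases "deriv (deriv V) pR > 0")
      case True
      obtain d where d: "d > 0" "\<forall>h>0. h < d \<longrightarrow> deriv V (pR - h) < deriv V pR"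
        using DERIV_pos_inc_left[OF ddV[OF inR] True] by blast
      define h where "h = min (d/2) ((pR - pm)/2)"
      have hb1: "h \<le> d/2" unfolding h_def by (rule min.cobounded1)
      have hb2: "h \<le> (pR - pm)/2" unfolding h_def by (rule min.cobounded2)
      have hb3: "h > 0" unfolding h_def using d crit_order by auto
      note hb = hb1 hb2 hb3
      have h: "h > 0" "h < d" using hb d by linarith+
      have h3: "pm < pR - h" using hb2 crit_order(2) by (simp add: field_simps)
      note h = h h3
      have yin: "pR - h \<in> {pa<..<pb}" using h inR inm by auto
      have neg: "deriv V (pR - h) < 0" using d h dR by auto
      obtain d' where d': "d' > 0" "\<forall>k>0. k < d' \<longrightarrow> V (pR - h) > V (pR - h + k)"
        using DERIV_neg_dec_right[OF dVy[OF yin] neg] by blast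
      define k where "k = min (d'/2) (h/2)"
      have kb1: "k \<le> d'/2" unfolding k_def by (rule min.cobounded1)
      have kb2: "k \<le> h/2" unfolding k_def by (rule min.cobounded2)
      have kb3: "k > 0" unfolding k_def using d' h by auto
      note kb = kb1 kb2 kb3
      have k: "k > 0" "k < d'" "pR - h + k \<le> pR" using kb d' h by linarith+
      have "V (pR - h) < V (pR - h + k)" using inc1[of "pR - h" "pR - h + k"] h k by auto
      thus False using d' k by auto
    next
      case False
      hence Dn: "deriv (deriv V) pR < 0" using D by auto
      obtain d where d: "d > 0" "\<forall>h>0. h < d \<longrightarrow> deriv V pR > deriv V (pR + h)"
        using DERIV_neg_dec_right[OF ddV[OF inR] Dn] by blast
      define h where "h = min (d/2) ((pb - pR)/2)"
      have hb1: "h \<le> d/2" unfolding h_def by (rule min.cobounded1)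
      have hb2: "h \<le> (pb - pR)/2" unfolding h_def by (rule min.cobounded2)
      have hb3: "h > 0" unfolding h_def using d inR by auto
      note hb = hb1 hb2 hb3
      have h: "h > 0" "h < d" using hb d by linarith+
      have h3: "pR + h < pb" using hb2 inR by (simp add: field_simps)
      note h = h h3
      have yin: "pR + h \<in> {pa<..<pb}" using h inR by auto
      have neg: "deriv V (pR + h) < 0" using d h dR by auto
      obtain d' where d': "d' > 0" "\<forall>k>0. k < d' \<longrightarrow> V (pR + h) > V (pR + h + k)"
        using DERIV_neg_dec_right[OF dVy[OF yin] neg] by blast
      define k where "k = min (d'/2) ((pb - (pR + h))/2)"
      have kb1: "k \<le> d'/2" unfolding k_def by (rule min.cobounded1)
      have kb2: "k \<le> (pb - (pR + h))/2" unfolding k_def by (rule min.cobounded2)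
      have kb3: "k > 0" unfolding k_def using d' h by auto
      note kb = kb1 kb2 kb3
      have k: "k > 0" "k < d'" using kb d' by linarith+
      have k3: "pR + h + k < pb" using kb2 h3 by (simp add: field_simps)
      note k = k k3
      have "V (pR + h) < V (pR + h + k)" using inc2[of "pR + h" "pR + h + k"] h k by auto
      thus False using d' k by auto
    qed
  qed
  have btwL: "V pL < V x \<and> V x < V pm" if "pL < x" "x < pm" for x
    using between_inj[OF contLm injLm order that] .
  have r1: "\<forall>x\<in>{pa<..pm}. x \<noteq> pL \<longrightarrow> V pL < V x"
  proof (intro ballI impI)
    fix x assume x: "x \<in> {pa<..pm}" "x \<noteq> pL"
    consider "x < pL" | "pL < x \<and> x < pm" | "x = pm" using x by force
    thus "V pL < V x" using left btwL order x by cases auto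
  qed
  have r2: "\<forall>x\<in>{pL..<pm}. V x < V pm"
    using btwL order by (auto simp: le_less)
  show ?thesis using pR_eq VR r1 r2 cont inL inR by auto
qed



lemma mfd_alg:
  fixes f V v w :: real
  assumes f: "f > 0" and V: "V > 0" and m: "w\<^sup>2 / (2 * f) + f / (f * V) * v\<^sup>2 / 2 = 1"
  shows "v\<^sup>2 \<le> 2 * V" "w = 0 \<Longrightarrow> v\<^sup>2 = 2 * V"
    "sqrt (f * V) - f / sqrt (f * V) * v\<^sup>2 / 2 = \<bar>w\<bar> * sqrt (2 * V - v\<^sup>2) / 2"
proof -
  have m2: "w\<^sup>2 * V = f * (2 * V - v\<^sup>2)" using m f V by (simp add: field_simps)
  show le: "v\<^sup>2 \<le> 2 * V"
  proof -
    have "0 \<le> w\<^sup>2 * V" using V by simp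
    hence "0 \<le> f * (2 * V - v\<^sup>2)" using m2 by simp
    thus ?thesis using f by (simp add: zero_le_mult_iff)
  qed
  show "w = 0 \<Longrightarrow> v\<^sup>2 = 2 * V" using m2 f by simp
  define A where "A = 2 * V - v\<^sup>2"
  have A: "A \<ge> 0" using le A_def by simp
  have w2: "w\<^sup>2 = f * A / V" using m2 V unfolding A_def by (simp add: field_simps)
  have w2': "\<bar>w\<bar>\<^sup>2 = f * A / V" using w2 by simp
  have wq: "\<bar>w\<bar> = sqrt (f * A / V)" using real_sqrt_unique[OF w2' abs_ge_zero] by simp
  have sA: "sqrt A * sqrt A = A" using A by simp
  have sfV: "sqrt (f * V) > 0" using f V by simp
  have "\<bar>w\<bar> * sqrt A / 2 = sqrt f * A / (2 * sqrt V)"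
    unfolding wq using sA f V A by (simp add: real_sqrt_mult real_sqrt_divide field_simps)
  also have "\<dots> = sqrt (f * V) - f / sqrt (f * V) * v\<^sup>2 / 2"
  proof -
    define sf sV where "sf = sqrt f" and "sV = sqrt V"
    have ef: "f = sf * sf" and eV: "V = sV * sV" unfolding sf_def sV_def using f V by simp_all
    have p: "sf > 0" "sV > 0" unfolding sf_def sV_def using f V by simp_all
    have "sqrt (f * V) = sf * sV" unfolding sf_def sV_def by (simp add: real_sqrt_mult)
    moreover have "sf * A / (2 * sV) = sf * sV - sf * sf / (sf * sV) * v\<^sup>2 / 2"
      unfolding A_def eV using p by (simp add: field_simps power2_eq_square)
    ultimately show ?thesis using ef unfolding sf_def sV_def by simp
  qed
  finally show "sqrt (f * V) - f / sqrt (f * V) * v\<^sup>2 / 2 = \<bar>w\<bar> * sqrt (2 * V - v\<^sup>2) / 2"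
    unfolding A_def by simp
qed



theorem lemma4p2:
  fixes pa pb b1 b2 :: real
    and Vh :: "real \<Rightarrow> real"
    and pL pR :: real
    and v ph w :: "real \<Rightarrow> real"
    and s3 :: real
  defines "pm \<equiv> (pa + pb) / 2"
    and "V \<equiv> Vpot pa pb b1 b2 Vh"
  assumes ab: "pa < pb" "pb - pa \<le> pi"
    and beta: "b1 > 0" "b2 \<ge> 0" "b2 = 0 \<longleftrightarrow> pb - pa = pi"
    and Vh_C3: "C3_on pa pb Vh"
    and Vh_pos: "\<forall>x\<in>{pa..pb}. Vh x > 0"
    and Vh_bdd: "bounded (Vh ` {pa..pb})"
    and V_pos: "\<forall>x\<in>{pa<..<pb}. V x > 0"
    and V_sym: "\<forall>x. pm + x \<in> {pa<..<pb} \<longrightarrow> V (pm + x) = V (pm - x)"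
    and crit_order: "pL < pm" "pm < pR"
    and crit: "{x\<in>{pa<..<pb}. deriv V x = 0} = {pL, pm, pR}"
    and nondeg: "\<forall>x\<in>{pL, pm, pR}. deriv (deriv V) x \<noteq> 0"
    and hyp: "V pR > (sin ((pR - pm) / 2))\<^sup>2 * V pm"
    \<comment> \<open>gamma' = (v, ph, w): a solution of the collision-manifold flow on ]-infinity, s3]\<close>
    and dom: "\<forall>s\<le>s3. ph s \<in> {pa<..<pb}"
    and ode_v: "\<forall>s\<le>s3. (v has_real_derivative coll_v pa pb V (v s) (ph s) (w s)) (at s within {..s3})"
    and ode_ph: "\<forall>s\<le>s3. (ph has_real_derivative w s) (at s within {..s3})"
    and ode_w: "\<forall>s\<le>s3. (w has_real_derivative coll_w pa pb V (v s) (ph s) (w s)) (at s within {..s3})"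
    and mfd: "\<forall>s\<le>s3. on_coll_mfd pa pb V (v s) (ph s) (w s)"
    \<comment> \<open>it lies in the unstable manifold of L'_- = (-sqrt(2 V pL), pL, 0)\<close>
    and lim_v: "(v \<longlongrightarrow> - sqrt (2 * V pL)) at_bot"
    and lim_ph: "(ph \<longlongrightarrow> pL) at_bot"
    and lim_w: "(w \<longlongrightarrow> 0) at_bot"
    \<comment> \<open>the branch along which initially w >= 0\<close>
    and branch: "\<forall>\<^sub>F s in at_bot. w s \<ge> 0"
    \<comment> \<open>s3 is the first time phi reaches pm\<close>
    and reach: "ph s3 = pm"
    and first: "\<forall>s<s3. ph s \<noteq> pm"
  shows "v s3 < 0"
proof -
  have pmd: "pm = (pa + pb) / 2" using pm_def by simp
  have Vd: "V = Vpot pa pb b1 b2 Vh" using V_def by simp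
  have VF: "pR = 2*pm - pL \<and> V pR = V pL \<and> (\<forall>x\<in>{pa<..pm}. x \<noteq> pL \<longrightarrow> V pL < V x)
     \<and> (\<forall>x\<in>{pL..<pm}. V x < V pm) \<and> continuous_on {pa<..<pb} V \<and> pa < pL \<and> pR < pb"
    by (rule V_facts[OF pmd Vd ab beta(1,2) Vh_C3 Vh_pos V_pos V_sym crit_order crit nondeg])
  have pR_eq: "pR = 2*pm - pL" using VF by blast
  have VR: "V pR = V pL" using VF by blast
  have Vgt: "\<And>x. x \<in> {pa<..pm} \<Longrightarrow> x \<noteq> pL \<Longrightarrow> V pL < V x" using VF by blast
  have Vlt: "\<And>x. x \<in> {pL..<pm} \<Longrightarrow> V x < V pm" using VF by blast
  have paL: "pa < pL" using VF by blast
  have mpb: "pm < pb" using pmd ab by simp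
  have Vp: "\<And>x. x \<in> {pa<..<pb} \<Longrightarrow> V x > 0" using V_pos by blast
  have VLpos: "V pL > 0" using Vp paL crit_order mpb by auto
  have VLm: "V pL < V pm" using Vgt[of pm] paL crit_order by auto
  have ev_ex: "\<exists>u\<le>c. P u" if ev: "eventually P at_bot" for P and c :: real
  proof -
    obtain N where N: "\<forall>n\<le>N. P n" using ev unfolding eventually_at_bot_linorder by blast
    show ?thesis using N by (intro exI[of _ "min N c"]) auto
  qed
  have atlt: "at s within {..s3} = at s" if "s < s3" for s
    using that by (intro at_within_open_subset[of s "{..<s3}"]) auto
  have dph: "(ph has_real_derivative w s) (at s)" if "s < s3" for s
    using ode_ph[rule_format, of s] that atlt[OF that] by simp
  have dv: "(v has_real_derivative coll_v pa pb V (v s) (ph s) (w s)) (at s)" if "s < s3" for s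
    using ode_v[rule_format, of s] that atlt[OF that] by simp
  have cph: "continuous_on {..s3} ph"
    unfolding continuous_on_eq_continuous_within
    using ode_ph DERIV_continuous by blast
  have cv: "continuous_on {..s3} v"
    unfolding continuous_on_eq_continuous_within
    using ode_v DERIV_continuous by blast
  have fpos: "fcoef pa pb x > 0" if "x \<in> {pa<..<pb}" for x
  proof -
    have s1: "sin (pb - x) > 0" using ab that by (intro sin_gt_zero) auto
    have s2: "sin (x - pa) > 0" using ab that by (intro sin_gt_zero) auto
    show ?thesis unfolding fcoef_def using s1 s2 by auto
  qed
  have M: "(v s)\<^sup>2 \<le> 2 * V (ph s) \<and> (w s = 0 \<longrightarrow> (v s)\<^sup>2 = 2 * V (ph s)) \<and>
     coll_v pa pb V (v s) (ph s) (w s) = \<bar>w s\<bar> * sqrt (2 * V (ph s) - (v s)\<^sup>2) / 2"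
    if "s \<le> s3" for s
  proof -
    have x: "ph s \<in> {pa<..<pb}" using dom that by blast
    note f = fpos[OF x] and VV = Vp[OF x]
    have m: "(w s)\<^sup>2 / (2 * fcoef pa pb (ph s)) + fcoef pa pb (ph s) / (fcoef pa pb (ph s) * V (ph s)) * (v s)\<^sup>2 / 2 = 1"
      using mfd[rule_format, OF that] unfolding on_coll_mfd_def Wfun_def .
    have "coll_v pa pb V (v s) (ph s) (w s) = sqrt (fcoef pa pb (ph s) * V (ph s)) - fcoef pa pb (ph s) / sqrt (fcoef pa pb (ph s) * V (ph s)) * (v s)\<^sup>2 / 2"
      unfolding coll_v_def Ffun_def Wfun_def by simp
    thus ?thesis using mfd_alg[OF f VV m] by simp
  qed
  have vmono: "v x \<le> v y" if "x \<le> y" "y \<le> s3" for x y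
  proof (rule DERIV_nonneg_imp_increasing_open[OF that(1)])
    fix z assume z: "x < z" "z < y"
    show "\<exists>D. (v has_real_derivative D) (at z) \<and> D \<ge> 0"
    proof (intro exI conjI)
      have zs: "z < s3" using z that by auto
      show "(v has_real_derivative coll_v pa pb V (v z) (ph z) (w z)) (at z)" using dv[OF zs] .
      have e: "coll_v pa pb V (v z) (ph z) (w z) = \<bar>w z\<bar> * sqrt (2 * V (ph z) - (v z)\<^sup>2) / 2"
        using M[of z] zs by auto
      have "(v z)\<^sup>2 \<le> 2 * V (ph z)" using M[of z] zs by auto
      thus "coll_v pa pb V (v z) (ph z) (w z) \<ge> 0" unfolding e by simp
    qed
  next
    show "continuous_on {x..y} v" by (rule continuous_on_subset[OF cv]) (use that in auto)
  qed
  have vlow: "v s \<ge> - sqrt (2 * V pL)" if "s \<le> s3" for s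
  proof (rule ccontr)
    assume "\<not> ?thesis"
    hence "v s < - sqrt (2 * V pL)" by simp
    from ev_ex[OF order_tendstoD(1)[OF lim_v this], of s]
    obtain u where "u \<le> s" "v s < v u" by blast
    thus False using vmono[of u s] that by auto
  qed
  have phle: "ph s < pm" if ss: "s < s3" for s
  proof (rule ccontr)
    assume "\<not> ph s < pm"
    hence ge: "pm < ph s" using first ss by force
    from ev_ex[OF order_tendstoD(2)[OF lim_ph crit_order(1)], of s]
    obtain u where u: "u \<le> s" "ph u < pm" by blast
    have i: "ph u \<le> pm" "pm \<le> ph s" "u \<le> s" using u ge by auto
    obtain z where z: "u \<le> z" "z \<le> s" "ph z = pm"
      using IVT'[OF i continuous_on_subset[OF cph]] ss by (auto simp: subset_eq)
    thus False using first ss by auto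
  qed
  have phle': "ph s \<le> pm" if "s \<le> s3" for s
    using phle[of s] reach that by (cases "s = s3") auto
  have Z: "ph s \<ge> pL" if as: "s \<le> s3" for s
  proof (rule ccontr)
    assume "\<not> ph s \<ge> pL"
    hence a: "ph s < pL" by simp
    have sl: "s < s3" using a reach crit_order as by (cases "s = s3") auto
    from ev_ex[OF order_tendstoD(1)[OF lim_ph a], of "s - 1"]
    obtain s0 where s0: "s0 \<le> s - 1" "ph s < ph s0" by blast
    have "\<exists>m\<in>{s0..s3}. \<forall>y\<in>{s0..s3}. ph m \<le> ph y"
      by (rule continuous_attains_inf) (use s0 sl in \<open>auto intro: continuous_on_subset[OF cph]\<close>)
    then obtain m where m: "m \<in> {s0..s3}" "\<forall>y\<in>{s0..s3}. ph m \<le> ph y" by blast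
    have mle: "ph m \<le> ph s" using m s0 sl by auto
    have m1: "m \<noteq> s0" using mle s0 by auto
    have m2: "m \<noteq> s3" using mle a reach crit_order by auto
    have mi: "s0 < m" "m < s3" using m m1 m2 by auto
    have w0: "w m = 0"
    proof (rule DERIV_local_min[OF dph[OF mi(2)]])
      show "0 < min (m - s0) (s3 - m)" using mi by auto
      show "\<forall>y. \<bar>m - y\<bar> < min (m - s0) (s3 - m) \<longrightarrow> ph m \<le> ph y"
        using m(2) by (auto simp: abs_less_iff)
    qed
    have xm: "ph m \<in> {pa<..<pb}" using dom mi by auto
    have phm: "ph m < pL" using mle a by simp
    have Vgm: "V pL < V (ph m)" using Vgt[of "ph m"] xm phm crit_order by auto
    have vm2: "(v m)\<^sup>2 = 2 * V (ph m)" using M[of m] w0 mi by auto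
    have vml: "v m \<ge> - sqrt (2 * V pL)" using vlow mi by auto
    have "sqrt (2 * V pL) < sqrt ((v m)\<^sup>2)" using vm2 Vgm by simp
    hence absg: "sqrt (2 * V pL) < \<bar>v m\<bar>" by simp
    hence vmg: "v m > sqrt (2 * V pL)" using vml by (auto simp: abs_if split: if_splits)
    have i: "ph m \<le> pL" "pL \<le> ph s3" "m \<le> s3" using phm reach crit_order mi by auto
    obtain c where c: "m \<le> c" "c \<le> s3" "ph c = pL"
      using IVT'[OF i continuous_on_subset[OF cph]] by (auto simp: subset_eq)
    have "v m \<le> v c" using vmono c by auto
    hence vcg: "sqrt (2 * V pL) < v c" using vmg by simp
    have "(sqrt (2 * V pL))\<^sup>2 < (v c)\<^sup>2"
      using vcg VLpos by (intro power_strict_mono) auto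
    hence "2 * V pL < (v c)\<^sup>2" using VLpos by simp
    moreover have "(v c)\<^sup>2 \<le> 2 * V pL" using M[of c] c by auto
    ultimately show False by simp
  qed
  show ?thesis
  proof (rule ccontr)
    assume "\<not> v s3 < 0"
    hence v3: "0 \<le> v s3" by simp
    have ng: "- sqrt (2 * V pL) < 0" using VLpos by simp
    from ev_ex[OF order_tendstoD(2)[OF lim_v ng], of s3]
    obtain u0 where u0: "u0 \<le> s3" "v u0 < 0" by blast
    have i: "v u0 \<le> 0" "0 \<le> v s3" "u0 \<le> s3" using u0 v3 by auto
    obtain t where t: "u0 \<le> t" "t \<le> s3" "v t = 0"
      using IVT'[OF i continuous_on_subset[OF cv]] by (auto simp: subset_eq)
    have W: "w s \<ge> 0" if st: "s < t" for s
    proof (rule ccontr)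
      assume "\<not> w s \<ge> 0"
      hence neg: "w s < 0" by simp
      have ss3: "s < s3" using st t by simp
      obtain d where d: "d > 0" "\<forall>h>0. h < d \<longrightarrow> ph s < ph (s - h)"
        using DERIV_neg_dec_left[OF dph[OF ss3] neg] by blast
      define a' where "a' = s - d/2"
      have pa': "ph s < ph a'" unfolding a'_def using d by auto
      have pLa: "pL < ph a'" using pa' Z[of s] ss3 by auto
      from ev_ex[OF order_tendstoD(2)[OF lim_ph pLa], of "a' - 1"]
      obtain s0 where s0: "s0 \<le> a' - 1" "ph s0 < ph a'" by blast
      have as: "a' < s" unfolding a'_def using d by simp
      have "\<exists>p\<in>{s0..s}. \<forall>y\<in>{s0..s}. ph y \<le> ph p"
        by (rule continuous_attains_sup) (use s0 as ss3 in \<open>auto intro: continuous_on_subset[OF cph]\<close>)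
      then obtain p where p: "p \<in> {s0..s}" "\<forall>y\<in>{s0..s}. ph y \<le> ph p" by blast
      have pge: "ph a' \<le> ph p" using p s0 as by auto
      have p1: "p \<noteq> s0" using pge s0 by auto
      have p2: "p \<noteq> s" using pge pa' by auto
      have pi': "s0 < p" "p < s" using p p1 p2 by auto
      have ps3: "p < s3" using pi' ss3 by simp
      have w0: "w p = 0"
      proof (rule DERIV_local_max[OF dph[OF ps3]])
        show "0 < min (p - s0) (s - p)" using pi' by auto
        show "\<forall>y. \<bar>p - y\<bar> < min (p - s0) (s - p) \<longrightarrow> ph y \<le> ph p"
          using p(2) by (auto simp: abs_less_iff)
      qed
      have xp: "ph p \<in> {pa<..<pb}" using dom ps3 by auto
      have php: "pL < ph p" using pge pLa by simp
      have Vgp: "V pL < V (ph p)" using Vgt[of "ph p"] xp php phle'[of p] ps3 by auto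
      have vp2: "(v p)\<^sup>2 = 2 * V (ph p)" using M[of p] w0 ps3 by auto
      have vpn: "v p \<le> 0" using vmono[of p t] t pi' st by auto
      have "sqrt (2 * V pL) < sqrt ((v p)\<^sup>2)" using vp2 Vgp by simp
      hence "sqrt (2 * V pL) < \<bar>v p\<bar>" by simp
      hence "v p < - sqrt (2 * V pL)" using vpn by simp
      thus False using vlow[of p] ps3 by simp
    qed
    define c where "c = sqrt (2 * V pm)"
    have cpos: "c > 0" using VLm VLpos unfolding c_def by simp
    have c2: "c\<^sup>2 = 2 * V pm" unfolding c_def using VLm VLpos by simp
    define G where "G s = arcsin (v s / c) - ph s / 2" for s
    have bnd: "-1 < v s / c \<and> v s / c \<le> 0" if "s \<le> t" for s
    proof -
      have st3: "s \<le> s3" using that t by simp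
      have vn: "v s \<le> 0" using vmono[of s t] that t by simp
      have "(v s)\<^sup>2 < c\<^sup>2"
      proof (cases "ph s = pm")
        case True
        hence "s = s3" using first st3 crit_order by force
        hence "v s = 0" using t that by simp
        thus ?thesis using cpos by simp
      next
        case False
        hence "ph s \<in> {pL..<pm}" using Z[OF st3] phle'[OF st3] by auto
        hence "V (ph s) < V pm" using Vlt by blast
        thus ?thesis using M[OF st3] c2 by simp
      qed
      hence "\<bar>v s\<bar>\<^sup>2 < c\<^sup>2" by simp
      hence "\<bar>v s\<bar> < c" using power2_less_imp_less[of "\<bar>v s\<bar>" c] cpos by simp
      hence "- c < v s" by simp
      thus ?thesis using vn cpos by (simp add: field_simps)
    qed
    have Gdec: "G t \<le> G u" if ut: "u \<le> t" for u
    proof (rule DERIV_nonpos_imp_decreasing_open[OF ut])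
      fix x assume x: "u < x" "x < t"
      have xs3: "x < s3" using x t by simp
      have xt: "x \<le> t" using x by simp
      have b: "-1 < v x / c" "v x / c < 1" using bnd[OF xt] by auto
      define cv' where "cv' = coll_v pa pb V (v x) (ph x) (w x)"
      have d1: "((\<lambda>s. v s / c) has_real_derivative cv' / c) (at x)"
        unfolding cv'_def by (rule DERIV_cdivide[OF dv[OF xs3]])
      have d2: "((\<lambda>s. arcsin (v s / c)) has_real_derivative inverse (sqrt (1 - (v x / c)\<^sup>2)) * (cv' / c)) (at x)"
        by (rule DERIV_chain2[OF DERIV_arcsin[OF b] d1])
      have d3: "((\<lambda>s. ph s / 2) has_real_derivative w x / 2) (at x)"
        by (rule DERIV_cdivide[OF dph[OF xs3]])
      have dG: "(G has_real_derivative inverse (sqrt (1 - (v x / c)\<^sup>2)) * (cv' / c) - w x / 2) (at x)"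
        unfolding G_def[abs_def] by (rule DERIV_diff[OF d2 d3])
      have wx: "w x \<ge> 0" using W x by simp
      have Mx: "(v x)\<^sup>2 \<le> 2 * V (ph x)" "cv' = w x * sqrt (2 * V (ph x) - (v x)\<^sup>2) / 2"
        using M[of x] xs3 wx unfolding cv'_def by auto
      have Vx: "V (ph x) \<le> V pm"
      proof -
        have "ph x \<in> {pL..<pm}" using Z[of x] phle[OF xs3] xs3 by auto
        thus ?thesis using Vlt by (simp add: less_imp_le)
      qed
      define S1 where "S1 = sqrt (2 * V (ph x) - (v x)\<^sup>2)"
      define S2 where "S2 = sqrt (2 * V pm - (v x)\<^sup>2)"
      have vc: "(v x)\<^sup>2 < c\<^sup>2"
      proof -
        have "\<bar>v x / c\<bar> < 1" using b by auto
        hence "\<bar>v x\<bar> < c" using cpos by (simp add: abs_divide)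
        hence "\<bar>v x\<bar>\<^sup>2 < c\<^sup>2" by (rule power_strict_mono) auto
        thus ?thesis by simp
      qed
      have S2pos: "S2 > 0" unfolding S2_def using vc c2 by simp
      have S12: "S1 \<le> S2" unfolding S1_def S2_def using Vx by simp
      have S1nn: "S1 \<ge> 0" unfolding S1_def using Mx by simp
      have key: "c * sqrt (1 - (v x / c)\<^sup>2) = S2"
      proof -
        have "c * sqrt (1 - (v x / c)\<^sup>2) = sqrt (c\<^sup>2) * sqrt (1 - (v x / c)\<^sup>2)" using cpos by simp
        also have "\<dots> = sqrt (c\<^sup>2 * (1 - (v x / c)\<^sup>2))" by (simp add: real_sqrt_mult)
        also have "c\<^sup>2 * (1 - (v x / c)\<^sup>2) = c\<^sup>2 - (v x)\<^sup>2" using cpos by (simp add: field_simps power2_eq_square)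
        finally show ?thesis unfolding S2_def c2 .
      qed
      have "inverse (sqrt (1 - (v x / c)\<^sup>2)) * (cv' / c) = w x * S1 / (2 * S2)"
        unfolding Mx(2) S1_def[symmetric] key[symmetric] using cpos
        by (simp add: field_simps)
      also have "\<dots> \<le> w x / 2"
      proof -
        have "w x * S1 \<le> w x * S2" by (rule mult_left_mono[OF S12 wx])
        thus ?thesis using S2pos by (simp add: field_simps)
      qed
      finally show "\<exists>y. (G has_real_derivative y) (at x) \<and> y \<le> 0"
        using dG by (intro exI[of _ "inverse (sqrt (1 - (v x / c)\<^sup>2)) * (cv' / c) - w x / 2"]) auto
    next
      have cu: "continuous_on {u..t} v" "continuous_on {u..t} ph"
        using continuous_on_subset[OF cv] continuous_on_subset[OF cph] t by (auto simp: subset_eq)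
      show "continuous_on {u..t} G"
      proof -
        have bb: "\<forall>x\<in>{u..t}. -1 \<le> v x / c \<and> v x / c \<le> 1"
          using bnd by (auto intro: less_imp_le order_trans[of _ 0 1])
        show ?thesis unfolding G_def[abs_def] using cu bb cpos
          by (intro continuous_intros) auto
      qed
    qed
    define r where "r = sqrt (2 * V pL) / c"
    have rpos: "0 < r" unfolding r_def using VLpos cpos by simp
    have rlt: "r < 1" unfolding r_def c_def using VLpos VLm by simp
    have r2: "r\<^sup>2 = V pL / V pm" unfolding r_def using c2 VLpos VLm
      by (simp add: power_divide)
    have limv: "((\<lambda>s. v s / c) \<longlongrightarrow> - r) at_bot"
      unfolding r_def using tendsto_divide[OF lim_v tendsto_const, of c] cpos by simp
    have lim: "(G \<longlongrightarrow> arcsin (- r) - pL / 2) at_bot"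
      unfolding G_def[abs_def]
      by (intro tendsto_diff isCont_tendsto_compose[OF isCont_arcsin limv] tendsto_divide lim_ph tendsto_const)
         (use rpos rlt in auto)
    have ev: "eventually (\<lambda>u. G t \<le> G u) at_bot"
      unfolding eventually_at_bot_linorder using Gdec by blast
    have "G t \<le> arcsin (- r) - pL / 2"
      by (rule tendsto_le[OF trivial_limit_at_bot_linorder lim tendsto_const ev])
    moreover have "G t = - ph t / 2" unfolding G_def using t by simp
    moreover have "arcsin (- r) = - arcsin r" using rpos rlt by (intro arcsin_minus) auto
    moreover have "ph t \<le> pm" using phle' t by simp
    ultimately have ar: "arcsin r \<le> (pm - pL) / 2" by simp
    define \<delta> where "\<delta> = (pm - pL) / 2"
    have dpos: "0 < \<delta>" unfolding \<delta>_def using crit_order by simp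
    have dle: "\<delta> \<le> pi / 2" unfolding \<delta>_def using paL pmd ab by simp
    have "sin (arcsin r) \<le> sin \<delta>"
      using ar arcsin_lbound[of r] arcsin_ubound[of r] rpos rlt dpos dle unfolding \<delta>_def
      by (subst sin_mono_le_eq) auto
    hence "r \<le> sin \<delta>" using rpos rlt by simp
    hence "r\<^sup>2 \<le> (sin \<delta>)\<^sup>2" using rpos by (intro power_mono) auto
    hence "V pL / V pm \<le> (sin \<delta>)\<^sup>2" using r2 by simp
    hence "V pL \<le> (sin \<delta>)\<^sup>2 * V pm" using VLpos VLm by (simp add: field_simps)
    moreover have "(pR - pm) / 2 = \<delta>" unfolding \<delta>_def pR_eq by simp
    ultimately show False using hyp VR by simp
  qed

qed

end
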